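(* Let $q\geq 23$. If $(x_0,x_1,x_2)$ is a state of nonnegative integers with $wt_q(x_0,x_1,x_2)=2^q$ and $x_2\geq q^2$, then Paul has a strategy (a choice of legal questions depending on Carole's previous answers) such that, whatever Carole answers, after exactly $q$ rounds the state $\vec{z}$ satisfies $wt_0(\vec{z})=1$, and every intermediate state $(u_0,u_1,u_2)$ reached after playing $q-j$ rounds satisfies $wt_j(u_0,u_1,u_2)=2^j$.
   Context: Liar game with $2$ lies: a state is $\vec{x}=(x_0,x_1,x_2)$ of nonnegative integers; in each round Paul chooses a legal question $\vec{a}=(a_0,a_1,a_2)$ with integers $0\leq a_i\leq x_i$, and Carole answers Y or N; the next state is $(a_0,\,a_1+x_0-a_0,\,a_2+x_1-a_1)$ after Y, or $(x_0-a_0,\,x_1-a_1+a_0,\,x_2-a_2+a_1)$ after N. Weight: $wt_j(x_0,x_1,x_2)=x_0\binom{j}{\leq 2}+x_1\binom{j}{\leq 1}+x_2$, with $\binom{j}{\leq m}=\sum_{i=0}^m\binom{j}{i}$ (so $wt_0(\vec{z})=z_0+z_1+z_2$). *)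

theory Defs
  imports Main
begin

type_synonym state = "nat \<times> nat \<times> nat"
type_synonym question = "nat \<times> nat \<times> nat"

definition binom_le :: "nat \<Rightarrow> nat \<Rightarrow> nat" where
  "binom_le j m = (\<Sum>i=0..m. j choose i)"

definition wt :: "nat \<Rightarrow> state \<Rightarrow> nat" where
  "wt j x = (case x of (x0, x1, x2) \<Rightarrow> x0 * binom_le j 2 + x1 * binom_le j 1 + x2)"

definition legal :: "state \<Rightarrow> question \<Rightarrow> bool" where
  "legal x a = (case x of (x0, x1, x2) \<Rightarrow> case a of (a0, a1, a2) \<Rightarrow>
      a0 \<le> x0 \<and> a1 \<le> x1 \<and> a2 \<le> x2)"

text \<open>Next state: True = answer Y, False = answer N.\<close>
definition next_state :: "state \<Rightarrow> question \<Rightarrow> bool \<Rightarrow> state" where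
  "next_state x a b = (case x of (x0, x1, x2) \<Rightarrow> case a of (a0, a1, a2) \<Rightarrow>
      if b then (a0, a1 + x0 - a0, a2 + x1 - a1)
      else (x0 - a0, x1 - a1 + a0, x2 - a2 + a1))"

text \<open>A strategy maps the history of Carole's previous answers to Paul's next question.
  run s x h bs: state reached from x when history h is already played and answers bs follow.\<close>
fun run :: "(bool list \<Rightarrow> question) \<Rightarrow> state \<Rightarrow> bool list \<Rightarrow> bool list \<Rightarrow> state" where
  "run s x h [] = x"
| "run s x h (b # bs) = run s (next_state x (s h) b) (h @ [b]) bs"

end

theory Submission
  imports Defs
begin


definition cc :: "nat \<Rightarrow> nat" where "cc n = n * (n - 1) div 2"

lemma two_cc: "2 * cc n = n * (n - 1)"
  unfolding cc_def by (cases n) auto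

lemma binom_le2: "binom_le n 2 = 1 + n + cc n"
proof -
  have "binom_le n 2 = (n choose 0) + (n choose 1) + (n choose 2)"
    unfolding binom_le_def by (simp add: numeral_2_eq_2)
  then show ?thesis unfolding cc_def using choose_two[of n] by simp
qed

lemma binom_le1: "binom_le n 1 = 1 + n"
  unfolding binom_le_def by simp

lemma cc_Suc: "cc (Suc n) = cc n + n"
proof -
  have "2 * cc (Suc n) = 2 * (cc n + n)" using two_cc[of "Suc n"] two_cc[of n]
    by (cases n) (auto simp: algebra_simps)
  then show ?thesis by simp
qed

lemma wt_eq: "wt n (y0, y1, y2) = y0 * (1 + n + cc n) + y1 * (1 + n) + y2"
  unfolding wt_def by (simp only: binom_le2 binom_le1) simp



definition cond :: "nat \<Rightarrow> nat \<Rightarrow> nat \<Rightarrow> nat \<Rightarrow> nat \<Rightarrow> nat \<Rightarrow> bool" where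
"cond n c hp x0 x1 x2 = (if even x0 then (if even x1 then 2*hp \<le> x1 + x2 else n \<le> x2 \<and> 2*hp + n + 1 \<le> x1 + x2)
   else if n + 1 \<le> 2*x1 then n \<le> x2 \<and> 4*hp + 3*n + 1 \<le> 2*(x1+x2)
   else c \<le> x2 + n*x1 \<and> n*x1 \<le> c + x2 \<and> c + 2*hp \<le> x2 + 2*x1 + n*x1 \<and> 2*hp + n*x1 \<le> x2 + c)"

definition good :: "nat \<Rightarrow> nat \<Rightarrow> nat \<Rightarrow> nat \<Rightarrow> nat \<Rightarrow> nat \<Rightarrow> nat \<Rightarrow> nat \<Rightarrow> nat \<Rightarrow> bool" where
"good n c hp x0 x1 x2 a0 a1 a2 = (a0 \<le> x0 \<and> a1 \<le> x1 \<and> a2 \<le> x2 \<and>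
   2*(a0*c + a1*n + a2) = c*x0 + n*x1 + x2 \<and> hp \<le> a2 + x1 - a1 \<and> hp \<le> x2 - a2 + a1 \<and>
   2*a0 \<le> x0 + 1 \<and> 2*(x0 - a0) \<le> x0 + 1)"

lemma core_EE:
  assumes "even x0" "even x1" "even (c*x0 + n*x1 + x2)" "2*hp \<le> x1 + x2"
  shows "\<exists>a0 a1 a2. good n c hp x0 x1 x2 a0 a1 a2"
proof -
  obtain b0 where b0: "x0 = 2*b0" using assms(1) by blast
  obtain b1 where b1: "x1 = 2*b1" using assms(2) by blast
  have "even x2" using assms(3) b0 b1 by simp
  then obtain b2 where b2: "x2 = 2*b2" by blast
  have "good n c hp x0 x1 x2 b0 b1 b2"
    unfolding good_def using b0 b1 b2 assms(4) by (simp add: algebra_simps)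
  then show ?thesis by blast
qed

lemma core_EO:
  assumes "even x0" "odd x1" "even (c*x0 + n*x1 + x2)" "n \<le> x2" "2*hp + n + 1 \<le> x1 + x2"
  shows "\<exists>a0 a1 a2. good n c hp x0 x1 x2 a0 a1 a2"
proof -
  obtain b0 where b0: "x0 = 2*b0" using assms(1) by blast
  obtain m where m: "x1 = 2*m + 1" using assms(2) oddE by blast
  have "even (x2 + n)" using assms(3) b0 m by (simp add: algebra_simps)
  then obtain b2 where b2: "x2 + n = 2*b2" by blast
  have "good n c hp x0 x1 x2 b0 m b2"
    unfolding good_def using b0 m b2 assms(4,5) by (simp add: algebra_simps)
  then show ?thesis by blast
qed

lemma core_O2:
  assumes "odd x0" "even (c*x0 + n*x1 + x2)"
    "c \<le> x2 + n*x1" "n*x1 \<le> c + x2" "c + 2*hp \<le> x2 + 2*x1 + n*x1" "2*hp + n*x1 \<le> x2 + c"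
  shows "\<exists>a0 a1 a2. good n c hp x0 x1 x2 a0 a1 a2"
proof -
  obtain b where b: "x0 = 2*b + 1" using assms(1) oddE by blast
  have "even (c + n*x1 + x2)" using assms(2) b by (simp add: algebra_simps)
  hence "even ((c + n*x1 + x2) - 2*c)" by (intro dvd_diff_nat) auto
  moreover have "(c + n*x1 + x2) - 2*c = x2 + n*x1 - c" using assms(3) by simp
  ultimately have "even (x2 + n*x1 - c)" by simp
  then obtain a2 where a2: "x2 + n*x1 - c = 2*a2" by blast
  have "good n c hp x0 x1 x2 (b+1) 0 a2"
    unfolding good_def using b a2 assms(3-6) by (simp add: algebra_simps, arith)
  then show ?thesis by blast
qed



lemma core_O1:
  assumes "odd x0" "even (c*x0 + n*x1 + x2)" "2*c + n = n*n" "n+1 \<le> 2*x1" "n \<le> x2"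
    "4*hp + 3*n + 1 \<le> 2*(x1+x2)"
  shows "\<exists>a0 a1 a2. good n c hp x0 x1 x2 a0 a1 a2"
proof -
  obtain b where b: "x0 = 2*b + 1" using assms(1) oddE by blast
  define k where "k = (2*x1 + 2 - n) div 4"
  have km: "2*x1 + 2 - n = 4*k + (2*x1 + 2 - n) mod 4" unfolding k_def by simp
  have "(2*x1 + 2 - n) mod 4 < 4" by simp
  hence k1: "4*int k \<le> 2*int x1 + 2 - int n" and k2: "2*int x1 + 2 - int n \<le> 4*int k + 3"
    using km assms(4) by linarith+
  have ev: "even (c + n*x1 + x2)" using assms(2) b by (simp add: algebra_simps)
  define N where "N = int n"
  define X1 where "X1 = int x1"
  define X2 where "X2 = int x2"
  define K where "K = int k"
  define Cc where "Cc = int c"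
  have k1': "4*K \<le> 2*X1 + 2 - N" using k1 unfolding K_def X1_def N_def .
  have k2': "2*X1 + 2 - N \<le> 4*K + 3" using k2 unfolding K_def X1_def N_def .
  have N0: "0 \<le> N" unfolding N_def by simp
  have cN: "2*Cc + N = N*N" unfolding Cc_def N_def using assms(3) by (metis of_nat_add of_nat_mult of_nat_numeral)
  have m1: "N*(4*K) \<le> N*(2*X1 + 2 - N)" using k1 N0 unfolding N_def X1_def K_def by (intro mult_left_mono) auto
  have m2: "N*(2*X1 + 2 - N) \<le> N*(4*K+3)" using k2 N0 unfolding N_def X1_def K_def by (intro mult_left_mono) auto
  have m1': "4*(N*K) \<le> 2*(N*X1) + 2*N - N*N" using m1 by (simp add: algebra_simps)
  have m2': "2*(N*X1) + 2*N - N*N \<le> 4*(N*K) + 3*N" using m2 by (simp add: algebra_simps)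
  define e where "e = N*X1 + X2 - Cc - 2*(N*K)"
  have eev: "even e"
  proof -
    have "even (Cc + N*X1 + X2)" using ev unfolding Cc_def N_def X1_def X2_def
      by (metis even_of_nat of_nat_add of_nat_mult)
    moreover have "e = (Cc + N*X1 + X2) - 2*(Cc + N*K)" unfolding e_def by (simp add: algebra_simps)
    ultimately show ?thesis by (metis dvd_diff dvd_triv_left)
  qed
  then obtain t where t: "e = 2*t" by blast
  have x2n: "N \<le> X2" using assms(5) unfolding N_def X2_def by simp
  have h6: "4*int hp + 3*N + 1 \<le> 2*(X1+X2)" using assms(6) unfolding N_def X1_def X2_def by simp
  have t0: "0 \<le> t" using t x2n m1' cN N0 unfolding e_def by (smt (verit))
  have t1: "t \<le> X2" using t x2n m2' cN N0 unfolding e_def by (smt (verit))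
  have kx1: "K \<le> X1" using k1' assms(4) unfolding N_def X1_def by linarith
  have "4*int hp - 1 \<le> 4*(t + X1 - K)" using t x2n m1' cN k1' h6 N0 unfolding e_def by (smt (verit))
  hence Y2: "int hp \<le> t + X1 - K" by presburger
  have "4*int hp - 1 \<le> 4*(X2 - t + K)" using t x2n m2' cN k2' h6 N0 unfolding e_def by (smt (verit))
  hence N2: "int hp \<le> X2 - t + K" by presburger
  have eq: "2*((int b + 1)*Cc + K*N + t) = Cc*(2*int b + 1) + N*X1 + X2"
    using t unfolding e_def by (simp add: algebra_simps)
  define a2 where "a2 = nat t"
  have a2t: "int a2 = t" unfolding a2_def using t0 by simp
  have "good n c hp x0 x1 x2 (b+1) k a2"
    unfolding good_def
  proof (intro conjI)
    show "b + 1 \<le> x0" using b by simp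
    show "k \<le> x1" using kx1 unfolding K_def X1_def by simp
    show "a2 \<le> x2" using t1 a2t unfolding X2_def by simp
    show "2 * ((b + 1) * c + k * n + a2) = c * x0 + n * x1 + x2"
    proof -
      have "int (2 * ((b + 1) * c + k * n + a2)) = int (c * x0 + n * x1 + x2)"
        using eq a2t b unfolding Cc_def K_def N_def X1_def X2_def by (simp add: algebra_simps)
      then show ?thesis by (simp only: of_nat_eq_iff)
    qed
    show "hp \<le> a2 + x1 - k" using Y2 a2t kx1 unfolding K_def X1_def by linarith
    show "hp \<le> x2 - a2 + k" using N2 a2t t1 unfolding K_def X2_def by linarith
    show "2 * (b + 1) \<le> x0 + 1" using b by simp
    show "2 * (x0 - (b + 1)) \<le> x0 + 1" using b by simp
  qed
  then show ?thesis by blast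
qed



definition H :: "nat \<Rightarrow> nat" where
  "H j = (if j < 4 then 0 else if j = 4 then 2 else if j = 5 then 5 else if j = 6 then 8
          else if j = 7 then 12 else j)"



lemma pow_cube: "12 \<le> n \<Longrightarrow> 3*(n+1)^3 \<le> (2::nat)^(n+1)"
proof (induction n rule: dec_induct)
  case base
  then show ?case by simp
next
  case (step m)
  have "3*(Suc m+1)^3 \<le> 2*(3*(m+1)^3)"
  proof -
    obtain t where t: "m = t + 12" using step(1) by (metis add.commute le_Suc_ex)
    show ?thesis unfolding t by (simp add: power3_eq_cube algebra_simps)
  qed
  also have "\<dots> \<le> 2*2^(m+1)" using step(3) by simp
  finally show ?case by simp
qed

lemma poly4: "12 \<le> n \<Longrightarrow> ((n::nat)^2 + 5*n + 8)*(9*n^2 + 19*n + 4) \<le> 12*(n+2)*(n+1)^3"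
proof -
  assume "12 \<le> n"
  then obtain t where t: "n = t + 12" by (metis add.commute le_Suc_ex)
  show ?thesis unfolding t by (simp add: power2_eq_square power3_eq_cube algebra_simps)
qed

lemma pow_quad: "8 \<le> n \<Longrightarrow> 4*n*(n+2) \<le> (2::nat)^(n+1)"
proof (induction n rule: dec_induct)
  case base
  then show ?case by simp
next
  case (step m)
  have "4*Suc m*(Suc m+2) \<le> 2*(4*m*(m+2))" using step(1) mult_le_mono[OF step(1) step(1)] by (simp add: algebra_simps)
  also have "\<dots> \<le> 2*2^(m+1)" using step(3) by simp
  finally show ?case by simp
qed



lemma two_C: "2*(2 + 2*n + cc n) = n^2 + 3*n + 4"
  using two_cc[of n] by (cases n) (auto simp: power2_eq_square algebra_simps)

lemma keyK:
  assumes n8: "8 \<le> n" and Q1: "277 \<le> Q" and Q2: "4 + 3*n + cc n \<le> Q"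
  shows "2^(n+1) * (2 + 2*n + cc n) + Q * ((2 + 2*n + cc n) + 4*n*(n+2)) \<le> Q * (2::nat)^(n+1)"
proof (cases "n \<le> 11")
  case True
  then have "n=8 \<or> n=9 \<or> n=10 \<or> n=11" using n8 by linarith
  then show ?thesis using Q1 by (elim disjE) (simp_all add: cc_def)
next
  case False
  define C where "C = 2 + 2*n + cc n"
  define P where "P = (2::nat)^(n+1)"
  define E where "E = C + 4*n*(n+2)"
  have "3*(n+1)^3 \<le> P" unfolding P_def using False pow_cube by simp
  hence "(4*(n+2))*(3*(n+1)^3) \<le> (4*(n+2))*P" by (rule mult_le_mono2)
  hence "12*(n+2)*(n+1)^3 \<le> 4*(n+2)*P" by (simp add: algebra_simps)
  moreover have "(n^2 + 5*n + 8)*(9*n^2 + 19*n + 4) \<le> 12*(n+2)*(n+1)^3" using False poly4 by simp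
  moreover have "(n^2 + 5*n + 8)*(9*n^2 + 19*n + 4) = 4*((C+n+2)*E)"
  proof -
    have "2*C = n^2 + 3*n + 4" unfolding C_def by (rule two_C)
    hence e1: "n^2 + 5*n + 8 = 2*(C+n+2)" by simp
    have e2: "9*n^2 + 19*n + 4 = 2*E" unfolding E_def using \<open>2*C = n^2 + 3*n + 4\<close>
      by (simp add: power2_eq_square algebra_simps)
    show ?thesis unfolding e1 e2 by simp
  qed
  ultimately have A: "(C+n+2)*E \<le> (n+2)*P" by linarith
  have "(n+2)*E \<le> (C+n+2)*E" by simp
  hence "E \<le> P" using A by (metis le_trans mult_le_cancel1 zero_less_Suc add_2_eq_Suc')
  then obtain D where D: "P = E + D" using le_Suc_ex by blast
  have QD: "(C+n+2)*D \<le> Q*D" using Q2 unfolding C_def by (intro mult_le_mono1) simp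
  have "(C+n+2)*P = C*P + (n+2)*P" by (simp add: algebra_simps)
  hence "(C+n+2)*E + (C+n+2)*D \<ge> C*P + (C+n+2)*E" using A D by (simp add: algebra_simps)
  hence "C*P \<le> (C+n+2)*D" by linarith
  hence "P*C + Q*E \<le> Q*E + Q*D" using QD by (simp add: mult.commute)
  also have "\<dots> = Q*P" using D by (simp add: algebra_simps)
  finally show ?thesis unfolding P_def C_def E_def by simp
qed



lemma two_cc': "2 * cc n + n = n * n"
  using two_cc[of n] by (cases n) auto

lemma Wbound:
  assumes n8: "8 \<le> n" and Q1: "277 \<le> Q" and Q2: "4 + 3*n + cc n \<le> Q"
    and xb: "Q*(x0-1) < 2^(n+1)"
  shows "x0*(2+2*n+cc n) + 4*n*(n+2) \<le> (2::nat)^(n+1)"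
proof (cases "x0 = 0")
  case True
  then show ?thesis using pow_quad[OF n8] by simp
next
  case False
  define C where "C = 2+2*n+cc n"
  define P where "P = (2::nat)^(n+1)"
  have "Q*x0 = Q*(x0-1) + Q" using False by (cases x0) auto
  hence "Q*x0 \<le> P + Q" using xb unfolding P_def by linarith
  hence "(Q*x0)*C \<le> (P+Q)*C" by (rule mult_le_mono1)
  moreover have "P*C + Q*(C + 4*n*(n+2)) \<le> Q*P" using keyK[OF n8 Q1 Q2] unfolding P_def C_def .
  ultimately have "Q*(x0*C + 4*n*(n+2)) \<le> Q*P" by (simp add: algebra_simps)
  hence "x0*C + 4*n*(n+2) \<le> P" using Q1 by simp
  then show ?thesis unfolding C_def P_def .
qed

lemma lin_mid:
  fixes c n x1 x2 p s :: nat
  assumes "2*p \<le> s" "2*c + n = s" "4*s + 8*n \<le> p + 2*x1 + x2" "Suc n \<le> x2" "2*x1 \<le> n"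
  shows "c \<le> x2 + p \<and> p \<le> c + x2 \<and> c + 2*n \<le> x2 + 2*x1 + p \<and> 2*n + p \<le> x2 + c"
  using assms by linarith

lemma lin_root:
  fixes c n x1 x2 p s :: nat
  assumes "2*p \<le> s" "2*c + n = s" "s + 2*n + 1 \<le> x2" "2*x1 \<le> n"
  shows "c \<le> x2 + p \<and> p \<le> c + x2 \<and> c + 2*n \<le> x2 + 2*x1 + p \<and> 2*n + p \<le> x2 + c"
  using assms by linarith

lemma mid_cond:
  assumes n8: "8 \<le> n" and W: "4*n*(n+2) \<le> x1*(n+2) + x2" and x2: "Suc n \<le> x2"
  shows "cond n (cc n) n x0 x1 x2"
proof -
  have "(n+2)*(4*n) \<le> (n+2)*(x1+x2)" using W by (simp add: algebra_simps)
  hence s: "4*n \<le> x1 + x2" by (subst (asm) mult_le_cancel1) simp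
  have c2: "2 * cc n + n = n * n" by (rule two_cc')
  show ?thesis
  proof (cases "n + 1 \<le> 2*x1")
    case True
    then show ?thesis unfolding cond_def using s x2 n8 by auto
  next
    case False
    hence "2*x1 \<le> n" by simp
    hence "n*(2*x1) \<le> n*n" by (rule mult_le_mono2)
    hence m: "2*(n*x1) \<le> n*n" by (simp add: algebra_simps)
    have W': "4*(n*n) + 8*n \<le> n*x1 + 2*x1 + x2" using W by (simp add: algebra_simps)
    have "cc n \<le> x2 + n*x1 \<and> n*x1 \<le> cc n + x2 \<and> cc n + 2*n \<le> x2 + 2*x1 + n*x1 \<and> 2*n + n*x1 \<le> x2 + cc n"
      using lin_mid[OF m c2 W' x2 \<open>2*x1 \<le> n\<close>] .
    then show ?thesis unfolding cond_def using s x2 n8 False by auto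
  qed
qed

lemma root_cond:
  assumes n8: "8 \<le> n" and x2: "(n+1)^2 \<le> x2"
  shows "cond n (cc n) n x0 x1 x2"
proof -
  have c2: "2 * cc n + n = n * n" by (rule two_cc')
  have x2': "n*n + 2*n + 1 \<le> x2" using x2 by (simp add: power2_eq_square algebra_simps)
  have nn: "8*n \<le> n*n" using n8 by (intro mult_le_mono1)
  have x2'': "10*n + 1 \<le> x2" using nn x2' by linarith
  show ?thesis
  proof (cases "n + 1 \<le> 2*x1")
    case True
    then show ?thesis unfolding cond_def using x2'' by auto
  next
    case False
    hence "2*x1 \<le> n" by simp
    hence "n*(2*x1) \<le> n*n" by (rule mult_le_mono2)
    hence m: "2*(n*x1) \<le> n*n" by (simp add: algebra_simps)
    have "cc n \<le> x2 + n*x1 \<and> n*x1 \<le> cc n + x2 \<and> cc n + 2*n \<le> x2 + 2*x1 + n*x1 \<and> 2*n + n*x1 \<le> x2 + cc n"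
      using lin_root[OF m c2 x2' \<open>2*x1 \<le> n\<close>] .
    then show ?thesis unfolding cond_def using x2'' False by auto
  qed
qed



lemma small_case:
  assumes n7: "n \<le> 7" and x0: "x0 \<le> 1"
    and w: "x0 * (2 + 2*n + cc n) + x1*(n+2) + x2 = 2^(Suc n)" and h: "H (Suc n) \<le> x2"
  shows "cond n (cc n) (H n) x0 x1 x2"
proof -
  have x01: "x0 = 0 \<or> x0 = 1" using x0 by auto
  have "n=0 \<or> n=1 \<or> n=2 \<or> n=3 \<or> n=4 \<or> n=5 \<or> n=6 \<or> n=7" using n7 by linarith
  then show ?thesis using x01 w h
    apply (elim disjE)
    apply (simp_all add: cond_def H_def cc_def)
    apply presburger+
    done
qed


definition Inv :: "nat \<Rightarrow> nat \<Rightarrow> state \<Rightarrow> bool" where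
"Inv q j x = (case x of (x0,x1,x2) \<Rightarrow> wt j (x0,x1,x2) = 2^j \<and> binom_le q 2 * (x0 - 1) < 2^j
   \<and> H j \<le> x2 \<and> (j = q \<longrightarrow> q^2 \<le> x2))"

lemma cc_mono: "m \<le> n \<Longrightarrow> cc m \<le> cc n"
  unfolding cc_def by (intro div_le_mono mult_le_mono) auto

lemma Q277: "23 \<le> q \<Longrightarrow> 277 \<le> binom_le q 2"
  using cc_mono[of 23 q] by (simp add: binom_le2 cc_def)

lemma Qmono: "Suc (Suc n) \<le> q \<Longrightarrow> 4 + 3*n + cc n \<le> binom_le q 2"
proof -
  assume a: "Suc (Suc n) \<le> q"
  have "cc (Suc (Suc n)) \<le> cc q" using a by (rule cc_mono)
  then show ?thesis using a by (simp add: binom_le2 cc_Suc)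
qed

lemma core:
  assumes "cond n c hp x0 x1 x2" "even (c*x0 + n*x1 + x2)" "2*c + n = n*n"
  shows "\<exists>a0 a1 a2. good n c hp x0 x1 x2 a0 a1 a2"
proof (cases "even x0")
  case True
  then show ?thesis
  proof (cases "even x1")
    case True
    then show ?thesis using core_EE \<open>even x0\<close> assms unfolding cond_def by simp
  next
    case False
    then show ?thesis using core_EO \<open>even x0\<close> assms unfolding cond_def by simp
  qed
next
  case False
  then show ?thesis
  proof (cases "n + 1 \<le> 2*x1")
    case True
    then show ?thesis using core_O1[of x0 c n x1 x2 hp] False assms unfolding cond_def by simp
  next
    case F2: False
    then show ?thesis using core_O2[of x0 c n x1 x2 hp] False assms unfolding cond_def by simp
  qed
qed

lemma wt_Suc: "wt (Suc n) (x0,x1,x2) = x0*(2 + 2*n + cc n) + x1*(n+2) + x2"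
  by (simp add: wt_eq cc_Suc algebra_simps)

lemma cond_of_Inv:
  assumes q23: "23 \<le> q" and nq: "Suc n \<le> q" and I: "Inv q (Suc n) (x0,x1,x2)"
  shows "cond n (cc n) (H n) x0 x1 x2"
proof -
  have w: "x0*(2 + 2*n + cc n) + x1*(n+2) + x2 = 2^(Suc n)"
    and xb: "binom_le q 2 * (x0 - 1) < 2^(Suc n)" and h: "H (Suc n) \<le> x2"
    and r: "Suc n = q \<longrightarrow> q^2 \<le> x2"
    using I unfolding Inv_def wt_Suc by auto
  have Q1: "277 \<le> binom_le q 2" using Q277[OF q23] .
  show ?thesis
  proof (cases "n \<le> 7")
    case True
    have "(2::nat)^(Suc n) \<le> 2^8" using True by (intro power_increasing) auto
    hence "binom_le q 2 * (x0 - 1) < 277" using xb by simp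
    hence "x0 - 1 = 0"
    proof -
      assume lt: "binom_le q 2 * (x0 - 1) < 277"
      show ?thesis
      proof (rule ccontr)
        assume "x0 - 1 \<noteq> 0"
        hence "1 \<le> x0 - 1" by simp
        hence "binom_le q 2 * 1 \<le> binom_le q 2 * (x0 - 1)" by (rule mult_le_mono2)
        hence "binom_le q 2 \<le> binom_le q 2 * (x0 - 1)" by (metis mult_1_right)
        thus False using Q1 lt by linarith
      qed
    qed
    hence "x0 \<le> 1" by simp
    then show ?thesis using small_case True w h by blast
  next
    case False
    hence n8: "8 \<le> n" by simp
    have Hn: "H n = n" "H (Suc n) = Suc n" using n8 unfolding H_def by auto
    show ?thesis
    proof (cases "Suc n = q")
      case True
      have "(n+1)^2 \<le> x2" using r True by simp
      then show ?thesis using root_cond[OF n8] Hn by simp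
    next
      case False
      hence "Suc (Suc n) \<le> q" using nq by simp
      hence Q2: "4 + 3*n + cc n \<le> binom_le q 2" by (rule Qmono)
      have "x0*(2+2*n+cc n) + 4*n*(n+2) \<le> 2^(n+1)" using Wbound[OF n8 Q1 Q2] xb by simp
      hence W: "4*n*(n+2) \<le> x1*(n+2) + x2" using w by simp
      show ?thesis using mid_cond[OF n8 W] h Hn by simp
    qed
  qed
qed

lemma step:
  assumes q23: "23 \<le> q" and nq: "Suc n \<le> q" and I: "Inv q (Suc n) x"
  shows "\<exists>a. legal x a \<and> Inv q n (next_state x a True) \<and> Inv q n (next_state x a False)"
proof -
  obtain x0 x1 x2 where x: "x = (x0,x1,x2)" by (cases x) auto
  have I': "Inv q (Suc n) (x0,x1,x2)" using I x by simp
  have cnd: "cond n (cc n) (H n) x0 x1 x2" using cond_of_Inv[OF q23 nq I'] .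
  have w: "x0*(2 + 2*n + cc n) + x1*(n+2) + x2 = 2*2^n"
    and xb: "binom_le q 2 * (x0 - 1) < 2*2^n"
    using I' unfolding Inv_def wt_Suc by auto
  have Seq: "(cc n*x0 + n*x1 + x2) + 2*(x0*(n+1) + x1) = 2*2^n" using w by (simp add: algebra_simps)
  have ev: "even (cc n*x0 + n*x1 + x2)"
  proof -
    have "even ((cc n*x0 + n*x1 + x2) + 2*(x0*(n+1) + x1))" using Seq by simp
    thus ?thesis by simp
  qed
  obtain a0 a1 a2 where g: "good n (cc n) (H n) x0 x1 x2 a0 a1 a2"
    using core[OF cnd ev two_cc'] by blast
  hence a: "a0 \<le> x0" "a1 \<le> x1" "a2 \<le> x2"
    and eq: "2*(a0*cc n + a1*n + a2) = cc n*x0 + n*x1 + x2"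
    and hY: "H n \<le> a2 + x1 - a1" and hN: "H n \<le> x2 - a2 + a1"
    and b0: "2*a0 \<le> x0 + 1" and b1: "2*(x0 - a0) \<le> x0 + 1"
    unfolding good_def by auto
  obtain u0 where u0: "x0 = a0 + u0" using a(1) le_Suc_ex by blast
  obtain u1 where u1: "x1 = a1 + u1" using a(2) le_Suc_ex by blast
  obtain u2 where u2: "x2 = a2 + u2" using a(3) le_Suc_ex by blast
  define c where "c = cc n"
  have Y: "next_state x (a0,a1,a2) True = (a0, a1 + u0, a2 + u1)"
    unfolding x next_state_def using u0 u1 by simp
  have N: "next_state x (a0,a1,a2) False = (u0, u1 + a0, u2 + a1)"
    unfolding x next_state_def using u0 u1 u2 by simp
  have e1: "2*(a0*c + a1*n + a2) = c*(a0+u0) + n*(a1+u1) + (a2+u2)" using eq u0 u1 u2 unfolding c_def by simp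
  have e2: "(a0+u0)*(2 + 2*n + c) + (a1+u1)*(n+2) + (a2+u2) = 2*2^n" using w u0 u1 u2 unfolding c_def by simp
  have wY: "wt n (a0, a1 + u0, a2 + u1) = 2^n"
  proof -
    have "2 * wt n (a0, a1 + u0, a2 + u1) = 2*2^n"
      using e1 e2 unfolding wt_eq c_def[symmetric] by (simp add: algebra_simps)
    thus ?thesis by simp
  qed
  have wN: "wt n (u0, u1 + a0, u2 + a1) = 2^n"
  proof -
    have "2 * wt n (u0, u1 + a0, u2 + a1) = 2*2^n"
      using e1 e2 unfolding wt_eq c_def[symmetric] by (simp add: algebra_simps)
    thus ?thesis by simp
  qed
  have Qa0: "binom_le q 2 * (a0 - 1) < 2^n"
  proof -
    have "2*(a0 - 1) \<le> x0 - 1" using b0 by simp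
    hence "binom_le q 2 * (2*(a0 - 1)) \<le> binom_le q 2 * (x0 - 1)" by (rule mult_le_mono2)
    moreover have "binom_le q 2 * (2*(a0 - 1)) = 2 * (binom_le q 2 * (a0 - 1))" by simp
    ultimately show ?thesis using xb by linarith
  qed
  have Qu0: "binom_le q 2 * (u0 - 1) < 2^n"
  proof -
    have "2*(u0 - 1) \<le> x0 - 1" using b1 u0 by simp
    hence "binom_le q 2 * (2*(u0 - 1)) \<le> binom_le q 2 * (x0 - 1)" by (rule mult_le_mono2)
    moreover have "binom_le q 2 * (2*(u0 - 1)) = 2 * (binom_le q 2 * (u0 - 1))" by simp
    ultimately show ?thesis using xb by linarith
  qed
  have "legal x (a0,a1,a2)" unfolding x legal_def using a by simp
  moreover have "Inv q n (next_state x (a0,a1,a2) True)"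
    unfolding Y Inv_def using wY Qa0 hY u1 nq by simp
  moreover have "Inv q n (next_state x (a0,a1,a2) False)"
    unfolding N Inv_def using wN Qu0 hN u2 nq by simp
  ultimately show ?thesis by blast
qed



definition pick :: "nat \<Rightarrow> nat \<Rightarrow> state \<Rightarrow> question" where
  "pick q j y = (SOME a. legal y a \<and> Inv q (j-1) (next_state y a True) \<and> Inv q (j-1) (next_state y a False))"

fun sr :: "(state \<Rightarrow> nat \<Rightarrow> question) \<Rightarrow> state \<Rightarrow> bool list \<Rightarrow> state" where
  "sr P x [] = x"
| "sr P x (b # r) = next_state (sr P x r) (P (sr P x r) (length r)) b"

lemma run_sr:
  "run (\<lambda>h. P (sr P x (rev h)) (length h)) (sr P x (rev h)) h bs = sr P x (rev (h @ bs))"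
proof (induction bs arbitrary: h)
  case Nil
  then show ?case by simp
next
  case (Cons b bs)
  have "next_state (sr P x (rev h)) (P (sr P x (rev h)) (length h)) b = sr P x (rev (h @ [b]))"
    by simp
  then show ?case using Cons.IH[of "h @ [b]"] by simp
qed

lemma pick_spec:
  assumes q23: "23 \<le> q" and j: "1 \<le> j" "j \<le> q" and I: "Inv q j y"
  shows "legal y (pick q j y) \<and> Inv q (j-1) (next_state y (pick q j y) True)
         \<and> Inv q (j-1) (next_state y (pick q j y) False)"
proof -
  obtain n where n: "j = Suc n" using j(1) by (cases j) auto
  have ex: "\<exists>a. legal y a \<and> Inv q n (next_state y a True) \<and> Inv q n (next_state y a False)"
    using step[OF q23 _ I[unfolded n]] j(2) n by simp
  have jn: "j - 1 = n" using n by simp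
  show ?thesis unfolding pick_def jn by (rule someI_ex[OF ex])
qed

lemma sr_Inv:
  assumes q23: "23 \<le> q" and I0: "Inv q q x"
  shows "length r \<le> q \<Longrightarrow> Inv q (q - length r) (sr (\<lambda>y k. pick q (q - k) y) x r)"
proof (induction r)
  case Nil
  then show ?case using I0 by simp
next
  case (Cons b r)
  let ?P = "\<lambda>y k. pick q (q - k) y"
  have I: "Inv q (q - length r) (sr ?P x r)" using Cons by simp
  have "1 \<le> q - length r" "q - length r \<le> q" using Cons.prems by auto
  from pick_spec[OF q23 this I]
  have "Inv q (q - length r - 1) (next_state (sr ?P x r) (pick q (q - length r) (sr ?P x r)) b)"
    by (cases b) auto
  then show ?case by simp
qed



theorem lemma16:
  fixes q x0 x1 x2 :: nat
  assumes "q \<ge> 23"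
    and "wt q (x0, x1, x2) = 2 ^ q"
    and "x2 \<ge> q ^ 2"
  shows "\<exists>s :: bool list \<Rightarrow> question.
     (\<forall>h. length h < q \<longrightarrow> legal (run s (x0, x1, x2) [] h) (s h)) \<and>
     (\<forall>h. length h = q \<longrightarrow> wt 0 (run s (x0, x1, x2) [] h) = 1) \<and>
     (\<forall>h. length h \<le> q \<longrightarrow>
        wt (q - length h) (run s (x0, x1, x2) [] h) = 2 ^ (q - length h))"
proof -
  define x where "x = (x0, x1, x2)"
  define P where "P = (\<lambda>y k. pick q (q - k) y)"
  define s where "s = (\<lambda>h. P (sr P x (rev h)) (length h))"
  have q23: "23 \<le> q" using assms(1) .
  have I0: "Inv q q x"
  proof -
    have w: "x0 * binom_le q 2 + x1 * binom_le q 1 + x2 = 2^q" using assms(2) unfolding wt_def by simp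
    have Qb: "binom_le q 2 * (x0 - 1) < 2^q"
    proof (cases x0)
      case 0
      then show ?thesis by simp
    next
      case (Suc m)
      have "binom_le q 2 * (x0 - 1) + binom_le q 2 \<le> 2^q" using w Suc by (simp add: algebra_simps)
      moreover have "0 < binom_le q 2" using Q277[OF q23] by simp
      ultimately show ?thesis by linarith
    qed
    have "q \<le> q^2" by (simp add: power2_eq_square)
    hence "H q \<le> x2" using assms(1,3) unfolding H_def by auto
    then show ?thesis unfolding Inv_def x_def using assms(2,3) Qb by simp
  qed
  have runeq: "run s x [] h = sr P x (rev h)" for h
    using run_sr[of P x "[]" h] unfolding s_def by simp
  have Ih: "length h \<le> q \<Longrightarrow> Inv q (q - length h) (run s x [] h)" for h
    using sr_Inv[OF q23 I0, of "rev h"] unfolding runeq P_def by simp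
  have wth: "length h \<le> q \<Longrightarrow> wt (q - length h) (run s x [] h) = 2 ^ (q - length h)" for h
    using Ih[of h] unfolding Inv_def by (cases "run s x [] h") auto
  have leg: "length h < q \<Longrightarrow> legal (run s x [] h) (s h)" for h
  proof -
    assume lh: "length h < q"
    have "s h = P (sr P x (rev h)) (length h)" unfolding s_def by simp
    hence "s h = pick q (q - length h) (run s x [] h)" unfolding runeq by (simp add: P_def)
    moreover have "1 \<le> q - length h" "q - length h \<le> q" using lh by auto
    ultimately show ?thesis using pick_spec[OF q23 _ _ Ih[of h]] lh by simp
  qed
  have "(\<forall>h. length h < q \<longrightarrow> legal (run s x [] h) (s h)) \<and>
     (\<forall>h. length h = q \<longrightarrow> wt 0 (run s x [] h) = 1) \<and>
     (\<forall>h. length h \<le> q \<longrightarrow> wt (q - length h) (run s x [] h) = 2 ^ (q - length h))"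
    using leg wth by (metis diff_self_eq_0 le_refl power_0)
  then show ?thesis unfolding x_def by blast
qed


end
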